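(* Suppose Assumption 1 holds, and let $\lambda^0$ be a probability measure on $(\mathsf{X},\mathcal{B}(\mathsf{X}))$ with $\lambda^0\ll\mu_{\mathrm{pr}}$. Define the probability measure $\widehat\lambda^0$ on $(\mathsf{X}^2,\mathcal{B}(\mathsf{X}^2))$ by $\widehat\lambda^0(A)=\lambda^0(A_\Delta)$, where $A_\Delta=\{z\in\mathsf{X}:(z,z)\in A\}$. Then for every $\ell=1,\dots,\mathsf{L}$, $\widehat\lambda^0\ll\nu_\ell$, where $\nu_\ell$ is the unique invariant probability measure of the joint kernel $\bm p_\ell$.
   Context: Setting: $\mathsf{X}$ separable Banach space, prior $\mu_{\mathrm{pr}}$; posteriors $\mu^y_j$ with $\mu_{\mathrm{pr}}$-densities $\pi^y_j$; proposal density $Q_\ell$ w.r.t. $\mu_{\mathrm{pr}}$; $\alpha_j(\theta,z)=\min\{1,\frac{\pi^y_j(z)Q_\ell(\theta)}{\pi^y_j(\theta)Q_\ell(z)}\}$. Joint kernel for $\bm\theta_\ell=(\theta_{\ell,\ell-1},\theta_{\ell,\ell})$: $\bm p_\ell(\bm\theta_\ell,A)=\int\min\{\alpha_{\ell-1}(\theta_{\ell,\ell-1},z),\alpha_\ell(\theta_{\ell,\ell},z)\}\mathbf 1_{\{(z,z)\in A\}}Q_\ell(z)\mu_{\mathrm{pr}}(\mathrm{d}z)+\int(\alpha_{\ell-1}(\theta_{\ell,\ell-1},z)-\alpha_\ell(\theta_{\ell,\ell},z))^+\mathbf 1_{\{(z,\theta_{\ell,\ell})\in A\}}Q_\ell(z)\mu_{\mathrm{pr}}(\mathrm{d}z)+\int(\alpha_\ell(\theta_{\ell,\ell},z)-\alpha_{\ell-1}(\theta_{\ell,\ell-1},z))^+\mathbf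 1_{\{(\theta_{\ell,\ell-1},z)\in A\}}Q_\ell(z)\mu_{\mathrm{pr}}(\mathrm{d}z)+\mathbf 1_{\{\bm\theta_\ell\in A\}}(1-\int\max\{\alpha_{\ell-1}(\theta_{\ell,\ell-1},z),\alpha_\ell(\theta_{\ell,\ell},z)\}Q_\ell(z)\mu_{\mathrm{pr}}(\mathrm{d}z))$. Under Assumption 1 this kernel has a unique invariant probability measure $\nu_\ell$. Assumption 1: (1.1) $Q_\ell$ continuous and positive; (1.2) each $\pi^y_j$ continuous and positive; (1.3) for $j=\ell-1,\ell$, all $c_r>0$, $\{\theta: Q_\ell(\theta)/\pi^y_j(\theta)\le c_r\}$ compact; (1.4) $\exists c\in(0,1)$ independent of $\ell$ with $\operatorname{ess\,inf}_z Q_\ell(z)/\pi^y_j(z)\ge c$; (1.5) $\exists r>1,C_r$ independent of $\ell$ with $\int Q_\ell^r\mathrm{d}\mu_{\mathrm{pr}}\le C_r$. *)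

theory Defs
  imports "HOL-Probability.Probability"
begin

text \<open>Metropolis-Hastings (independence sampler) acceptance probability
  alpha_j(theta, z) for target density dens (w.r.t. the prior) and proposal density Q.\<close>
definition mh_alpha :: "('a \<Rightarrow> real) \<Rightarrow> ('a \<Rightarrow> real) \<Rightarrow> 'a \<Rightarrow> 'a \<Rightarrow> real" where
  "mh_alpha dens Q \<theta> z = min 1 ((dens z * Q \<theta>) / (dens \<theta> * Q z))"

text \<open>The joint (coupled) kernel p_l(theta_l, A) on X^2, with prior M,
  coarse density pi0 = pi_(l-1), fine density pi1 = pi_l and proposal density Q = Q_l.\<close>
definition joint_kernel ::
  "'a measure \<Rightarrow> ('a \<Rightarrow> real) \<Rightarrow> ('a \<Rightarrow> real) \<Rightarrow> ('a \<Rightarrow> real) \<Rightarrow> ('a \<times> 'a) \<Rightarrow> ('a \<times> 'a) set \<Rightarrow> real"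
where
  "joint_kernel M pi0 pi1 Q \<theta>\<theta> A =
     (\<integral>z. min (mh_alpha pi0 Q (fst \<theta>\<theta>) z) (mh_alpha pi1 Q (snd \<theta>\<theta>) z)
            * indicator A (z, z) * Q z \<partial>M)
   + (\<integral>z. max 0 (mh_alpha pi0 Q (fst \<theta>\<theta>) z - mh_alpha pi1 Q (snd \<theta>\<theta>) z)
            * indicator A (z, snd \<theta>\<theta>) * Q z \<partial>M)
   + (\<integral>z. max 0 (mh_alpha pi1 Q (snd \<theta>\<theta>) z - mh_alpha pi0 Q (fst \<theta>\<theta>) z)
            * indicator A (fst \<theta>\<theta>, z) * Q z \<partial>M)
   + indicator A \<theta>\<theta> * (1 - (\<integral>z. max (mh_alpha pi0 Q (fst \<theta>\<theta>) z) (mh_alpha pi1 Q (snd \<theta>\<theta>) z)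
            * Q z \<partial>M))"

definition joint_invariant ::
  "'a::topological_space measure \<Rightarrow> ('a \<Rightarrow> real) \<Rightarrow> ('a \<Rightarrow> real) \<Rightarrow> ('a \<Rightarrow> real) \<Rightarrow> ('a \<times> 'a) measure \<Rightarrow> bool"
where
  "joint_invariant M pi0 pi1 Q \<nu> \<longleftrightarrow>
     prob_space \<nu> \<and> sets \<nu> = sets borel \<and>
     (\<forall>A \<in> sets borel. measure \<nu> A = (\<integral>\<theta>\<theta>. joint_kernel M pi0 pi1 Q \<theta>\<theta> A \<partial>\<nu>))"

definition diag_lift :: "'a::topological_space measure \<Rightarrow> ('a \<times> 'a) measure" where
  "diag_lift lam = distr lam borel (\<lambda>z. (z, z))"

end

theory Submission
  imports Defs
begin

lemma mh_alpha_pos: "dens z > 0 \<Longrightarrow> dens t > 0 \<Longrightarrow> Q z > 0 \<Longrightarrow> Q t > 0 \<Longrightarrow> mh_alpha dens Q t z > 0"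
  unfolding mh_alpha_def by auto

lemma mh_alpha_le1: "mh_alpha dens Q t z \<le> 1"
  unfolding mh_alpha_def by auto

lemma jk_meas:
  fixes M :: "'a::{banach, second_countable_topology} measure"
  assumes sf: "sigma_finite_measure M" and MS: "sets M = sets borel"
   and [measurable]: "p0 \<in> borel_measurable borel" "p1 \<in> borel_measurable borel" "Q \<in> borel_measurable borel"
   and A: "A \<in> sets (borel :: ('a\<times>'a) measure)"
  shows "(\<lambda>t. joint_kernel M p0 p1 Q t A) \<in> borel_measurable (borel \<Otimes>\<^sub>M borel)"
proof -
  interpret sigma_finite_measure M by (rule sf)
  have [measurable]: "A \<in> sets (borel \<Otimes>\<^sub>M borel)" using A unfolding borel_prod .
  have SS: "sets ((borel \<Otimes>\<^sub>M borel) \<Otimes>\<^sub>M M) = sets ((borel \<Otimes>\<^sub>M borel) \<Otimes>\<^sub>M (borel::'a measure))"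
    by (rule sets_pair_measure_cong[OF refl MS])
  have m1: "(\<lambda>w. min (mh_alpha p0 Q (fst (fst w)) (snd w)) (mh_alpha p1 Q (snd (fst w)) (snd w))
            * indicator A (snd w, snd w) * Q (snd w)) \<in> borel_measurable ((borel \<Otimes>\<^sub>M borel) \<Otimes>\<^sub>M M)"
    unfolding measurable_cong_sets[OF SS refl] unfolding mh_alpha_def by measurable
  have m2: "(\<lambda>w. max 0 (mh_alpha p0 Q (fst (fst w)) (snd w) - mh_alpha p1 Q (snd (fst w)) (snd w))
            * indicator A (snd w, snd (fst w)) * Q (snd w)) \<in> borel_measurable ((borel \<Otimes>\<^sub>M borel) \<Otimes>\<^sub>M M)"
    unfolding measurable_cong_sets[OF SS refl] unfolding mh_alpha_def by measurable
  have m3: "(\<lambda>w. max 0 (mh_alpha p1 Q (snd (fst w)) (snd w) - mh_alpha p0 Q (fst (fst w)) (snd w))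
            * indicator A (fst (fst w), snd w) * Q (snd w)) \<in> borel_measurable ((borel \<Otimes>\<^sub>M borel) \<Otimes>\<^sub>M M)"
    unfolding measurable_cong_sets[OF SS refl] unfolding mh_alpha_def by measurable
  have m4: "(\<lambda>w. max (mh_alpha p0 Q (fst (fst w)) (snd w)) (mh_alpha p1 Q (snd (fst w)) (snd w))
            * Q (snd w)) \<in> borel_measurable ((borel \<Otimes>\<^sub>M borel) \<Otimes>\<^sub>M M)"
    unfolding measurable_cong_sets[OF SS refl] unfolding mh_alpha_def by measurable
  have [measurable]: "(\<lambda>t. \<integral>z. min (mh_alpha p0 Q (fst t) z) (mh_alpha p1 Q (snd t) z)
            * indicator A (z, z) * Q z \<partial>M) \<in> borel_measurable (borel \<Otimes>\<^sub>M borel)"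
    by (rule borel_measurable_lebesgue_integral) (use m1 in \<open>simp add: case_prod_beta\<close>)
  have [measurable]: "(\<lambda>t. \<integral>z. max 0 (mh_alpha p0 Q (fst t) z - mh_alpha p1 Q (snd t) z)
            * indicator A (z, snd t) * Q z \<partial>M) \<in> borel_measurable (borel \<Otimes>\<^sub>M borel)"
    by (rule borel_measurable_lebesgue_integral) (use m2 in \<open>simp add: case_prod_beta\<close>)
  have [measurable]: "(\<lambda>t. \<integral>z. max 0 (mh_alpha p1 Q (snd t) z - mh_alpha p0 Q (fst t) z)
            * indicator A (fst t, z) * Q z \<partial>M) \<in> borel_measurable (borel \<Otimes>\<^sub>M borel)"
    by (rule borel_measurable_lebesgue_integral) (use m3 in \<open>simp add: case_prod_beta\<close>)
  have [measurable]: "(\<lambda>t. \<integral>z. max (mh_alpha p0 Q (fst t) z) (mh_alpha p1 Q (snd t) z)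
            * Q z \<partial>M) \<in> borel_measurable (borel \<Otimes>\<^sub>M borel)"
    by (rule borel_measurable_lebesgue_integral) (use m4 in \<open>simp add: case_prod_beta\<close>)
  show ?thesis unfolding joint_kernel_def by measurable
qed

lemma bnd_int:
  fixes M :: "'a::{banach, second_countable_topology} measure" and q g :: "'a \<Rightarrow> real"
  assumes q: "integrable M q" "\<And>z. q z \<ge> 0" "(\<integral>z. q z \<partial>M) = 1"
    and g: "g \<in> borel_measurable M" "\<And>z. \<bar>g z\<bar> \<le> 1"
  shows "integrable M (\<lambda>z. g z * q z)" "\<bar>\<integral>z. g z * q z \<partial>M\<bar> \<le> 1"
proof -
  have qm: "q \<in> borel_measurable M" using q(1) by auto
  show I: "integrable M (\<lambda>z. g z * q z)"
  proof (rule Bochner_Integration.integrable_bound[OF q(1)])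
    show "(\<lambda>z. g z * q z) \<in> borel_measurable M" using g(1) qm by measurable
    show "AE x in M. norm (g x * q x) \<le> norm (q x)"
      using g(2) q(2) by (auto simp: abs_mult intro!: mult_left_le_one_le)
  qed
  have "\<bar>\<integral>z. g z * q z \<partial>M\<bar> \<le> (\<integral>z. norm (g z * q z) \<partial>M)"
    using integral_norm_bound[of M "\<lambda>z. g z * q z"] by simp
  also have "\<dots> \<le> (\<integral>z. q z \<partial>M)"
  proof (rule integral_mono)
    show "integrable M (\<lambda>z. norm (g z * q z))" using I by (rule integrable_norm)
  qed (use q g(2) in \<open>auto simp: abs_mult intro!: mult_left_le_one_le\<close>)
  finally show "\<bar>\<integral>z. g z * q z \<partial>M\<bar> \<le> 1" using q(3) by simp
qed


lemma mh_meas: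
  assumes [measurable]: "p \<in> borel_measurable borel" "Q \<in> borel_measurable borel"
  shows "(\<lambda>z. mh_alpha p Q x z) \<in> borel_measurable borel"
  unfolding mh_alpha_def by measurable

lemma ind_meas:
  fixes A :: "('a::second_countable_topology \<times> 'a) set"
  assumes "A \<in> sets borel"
  shows "(\<lambda>z. indicator A (z, y) :: real) \<in> borel_measurable borel"
    "(\<lambda>z. indicator A (y, z) :: real) \<in> borel_measurable borel"
    "(\<lambda>z. indicator A (z, z) :: real) \<in> borel_measurable borel"
proof -
  have [measurable]: "A \<in> sets (borel \<Otimes>\<^sub>M borel)" using assms unfolding borel_prod .
  show "(\<lambda>z. indicator A (z, y) :: real) \<in> borel_measurable borel" by measurable
  show "(\<lambda>z. indicator A (y, z) :: real) \<in> borel_measurable borel" by measurable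
  show "(\<lambda>z. indicator A (z, z) :: real) \<in> borel_measurable borel" by measurable
qed

lemma jk_props:
  fixes M :: "'a::{banach, second_countable_topology} measure"
  assumes MS: "sets M = sets borel"
   and [measurable]: "p0 \<in> borel_measurable borel" "p1 \<in> borel_measurable borel" "Q \<in> borel_measurable borel"
   and pos: "\<And>z. p0 z > 0" "\<And>z. p1 z > 0" "\<And>z. Q z > 0"
   and q: "integrable M Q" "(\<integral>z. Q z \<partial>M) = 1"
   and A: "A \<in> sets (borel :: ('a\<times>'a) measure)"
  shows "0 \<le> joint_kernel M p0 p1 Q t A" "joint_kernel M p0 p1 Q t A \<le> 5"
    "joint_kernel M p0 p1 Q t A = 0 \<Longrightarrow> AE z in M. (z, z) \<notin> A"
proof -
  have MM: "\<And>X. measurable M X = measurable borel X" by (rule measurable_cong_sets[OF MS refl])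
  have [measurable]: "A \<in> sets (borel \<Otimes>\<^sub>M borel)" using A unfolding borel_prod .
  define a0 where "a0 = mh_alpha p0 Q (fst t)"
  define a1 where "a1 = mh_alpha p1 Q (snd t)"
  have "(\<lambda>z. mh_alpha p0 Q (fst t) z) \<in> borel_measurable borel" "(\<lambda>z. mh_alpha p1 Q (snd t) z) \<in> borel_measurable borel"
    by (rule mh_meas; fact)+
  then have [measurable]: "a0 \<in> borel_measurable borel" "a1 \<in> borel_measurable borel"
    unfolding a0_def a1_def by auto
  have a0: "\<And>z. 0 < a0 z \<and> a0 z \<le> 1" unfolding a0_def mh_alpha_def using pos by auto
  have a1: "\<And>z. 0 < a1 z \<and> a1 z \<le> 1" unfolding a1_def mh_alpha_def using pos by auto
  have qq: "integrable M Q" "\<And>z. Q z \<ge> 0" "(\<integral>z. Q z \<partial>M) = 1" using q pos(3) less_imp_le by blast+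
  define g1 where "g1 z = min (a0 z) (a1 z) * indicator A (z, z)" for z
  define g2 where "g2 z = max 0 (a0 z - a1 z) * indicator A (z, snd t)" for z
  define g3 where "g3 z = max 0 (a1 z - a0 z) * indicator A (fst t, z)" for z
  define g4 where "g4 z = max (a0 z) (a1 z)" for z
  have "g1 \<in> borel_measurable borel" "g2 \<in> borel_measurable borel" "g3 \<in> borel_measurable borel"
     "g4 \<in> borel_measurable borel"
    using ind_meas[OF A] unfolding g1_def[abs_def] g2_def[abs_def] g3_def[abs_def] g4_def[abs_def]
    by (intro borel_measurable_times borel_measurable_max borel_measurable_min borel_measurable_diff; simp)+
  then have gm: "g1 \<in> borel_measurable M" "g2 \<in> borel_measurable M" "g3 \<in> borel_measurable M"
     "g4 \<in> borel_measurable M" unfolding MM by auto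
  have b1: "0 \<le> g1 z \<and> \<bar>g1 z\<bar> \<le> 1" for z unfolding g1_def using a0[of z] a1[of z] by (auto simp: indicator_def)
  have b2: "0 \<le> g2 z \<and> \<bar>g2 z\<bar> \<le> 1" for z unfolding g2_def using a0[of z] a1[of z] by (auto simp: indicator_def)
  have b3: "0 \<le> g3 z \<and> \<bar>g3 z\<bar> \<le> 1" for z unfolding g3_def using a0[of z] a1[of z] by (auto simp: indicator_def)
  have b4: "0 \<le> g4 z \<and> \<bar>g4 z\<bar> \<le> 1" for z unfolding g4_def using a0[of z] a1[of z] by (auto simp: max_def)
  have bb: "\<bar>g1 z\<bar> \<le> 1" "\<bar>g2 z\<bar> \<le> 1" "\<bar>g3 z\<bar> \<le> 1" "\<bar>g4 z\<bar> \<le> 1" for z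
    using b1 b2 b3 b4 by blast+
  note I1 = bnd_int[OF qq gm(1) bb(1)] and I2 = bnd_int[OF qq gm(2) bb(2)]
    and I3 = bnd_int[OF qq gm(3) bb(3)] and I4 = bnd_int[OF qq gm(4) bb(4)]
  define T1 where "T1 = (\<integral>z. g1 z * Q z \<partial>M)"
  define T2 where "T2 = (\<integral>z. g2 z * Q z \<partial>M)"
  define T3 where "T3 = (\<integral>z. g3 z * Q z \<partial>M)"
  define T4 where "T4 = (\<integral>z. g4 z * Q z \<partial>M)"
  have jk: "joint_kernel M p0 p1 Q t A = T1 + T2 + T3 + indicator A t * (1 - T4)"
    unfolding joint_kernel_def T1_def T2_def T3_def T4_def g1_def g2_def g3_def g4_def a0_def a1_def ..
  have n1: "0 \<le> T1" unfolding T1_def using b1 qq(2) by (intro Bochner_Integration.integral_nonneg) auto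
  have n2: "0 \<le> T2" unfolding T2_def using b2 qq(2) by (intro Bochner_Integration.integral_nonneg) auto
  have n3: "0 \<le> T3" unfolding T3_def using b3 qq(2) by (intro Bochner_Integration.integral_nonneg) auto
  have u1: "T1 \<le> 1" "T2 \<le> 1" "T3 \<le> 1" "\<bar>T4\<bar> \<le> 1"
    using I1(2) I2(2) I3(2) I4(2) b1 b2 b3 b4 unfolding T1_def T2_def T3_def T4_def by auto
  have "0 \<le> indicator A t * (1 - T4)" using u1(4) by (auto simp: indicator_def)
  moreover have "indicator A t * (1 - T4) \<le> 2" using u1(4) by (auto simp: indicator_def)
  ultimately show "0 \<le> joint_kernel M p0 p1 Q t A" "joint_kernel M p0 p1 Q t A \<le> 5"
    unfolding jk using n1 n2 n3 u1 by linarith+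
  assume "joint_kernel M p0 p1 Q t A = 0"
  with \<open>0 \<le> indicator A t * (1 - T4)\<close> n1 n2 n3 have "T1 = 0" unfolding jk by linarith
  then have "AE z in M. g1 z * Q z = 0" unfolding T1_def
    using integral_nonneg_eq_0_iff_AE[OF I1(1)] b1 qq(2) by auto
  then show "AE z in M. (z, z) \<notin> A"
  proof (rule AE_mp, intro AE_I2 impI)
    fix z assume "g1 z * Q z = 0"
    moreover have "min (a0 z) (a1 z) * Q z > 0" using a0 a1 pos by auto
    ultimately show "(z, z) \<notin> A" unfolding g1_def by (auto simp: indicator_def)
  qed
qed


theorem mainTheorem7:
  fixes M :: "'a::{banach, second_countable_topology} measure"
    and dens :: "nat \<Rightarrow> 'a \<Rightarrow> real"
    and Q :: "nat \<Rightarrow> 'a \<Rightarrow> real"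
    and L :: nat
    and lam0 :: "'a measure"
    and c r Cr :: real
  assumes prior: "prob_space M" "sets M = sets borel"
    and post_dens: "\<And>j. integrable M (dens j) \<and> (\<integral>z. dens j z \<partial>M) = 1"
    and prop_dens: "\<And>l. integrable M (Q l) \<and> (\<integral>z. Q l z \<partial>M) = 1"
    \<comment> \<open>Assumption 1.1\<close>
    and A11: "\<And>l. l \<in> {1..L} \<Longrightarrow> continuous_on UNIV (Q l) \<and> (\<forall>z. Q l z > 0)"
    \<comment> \<open>Assumption 1.2\<close>
    and A12: "\<And>j. continuous_on UNIV (dens j) \<and> (\<forall>z. dens j z > 0)"
    \<comment> \<open>Assumption 1.3\<close>
    and A13: "\<And>l j cr. l \<in> {1..L} \<Longrightarrow> j \<in> {l - 1, l} \<Longrightarrow> cr > 0 \<Longrightarrow>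
                 compact {\<theta>. Q l \<theta> / dens j \<theta> \<le> cr}"
    \<comment> \<open>Assumption 1.4 (c independent of l)\<close>
    and A14: "0 < c" "c < 1"
      "\<And>l j. l \<in> {1..L} \<Longrightarrow> j \<in> {l - 1, l} \<Longrightarrow> (AE z in M. Q l z / dens j z \<ge> c)"
    \<comment> \<open>Assumption 1.5 (r, Cr independent of l)\<close>
    and A15: "r > 1"
      "\<And>l. l \<in> {1..L} \<Longrightarrow> (\<integral>\<^sup>+ z. ennreal (Q l z powr r) \<partial>M) \<le> ennreal Cr"
    and lam: "prob_space lam0" "sets lam0 = sets borel" "absolutely_continuous M lam0"
  shows "\<forall>l \<in> {1..L}. \<forall>\<nu>. joint_invariant M (dens (l - 1)) (dens l) (Q l) \<nu> \<longrightarrow>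
           absolutely_continuous \<nu> (diag_lift lam0)"
proof (intro ballI allI impI)
  fix l \<nu> assume l: "l \<in> {1..L}" and inv: "joint_invariant M (dens (l - 1)) (dens l) (Q l) \<nu>"
  have nu: "prob_space \<nu>" "sets \<nu> = sets borel"
    and eq: "\<And>A. A \<in> sets borel \<Longrightarrow> measure \<nu> A = (\<integral>t. joint_kernel M (dens (l - 1)) (dens l) (Q l) t A \<partial>\<nu>)"
    using inv unfolding joint_invariant_def by auto
  interpret nu: prob_space \<nu> by (rule nu(1))
  interpret Mp: prob_space M by (rule prior(1))
  have dm: "dens j \<in> borel_measurable borel" for j using A12[of j] borel_measurable_continuous_onI by blast
  have qm: "Q l \<in> borel_measurable borel" using A11[OF l] borel_measurable_continuous_onI by blast
  have Mspace: "space M = UNIV" using sets_eq_imp_space_eq[OF prior(2)] by simp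
  have Lspace: "space lam0 = UNIV" using sets_eq_imp_space_eq[OF lam(2)] by simp
  have nuS: "sets \<nu> = sets (borel \<Otimes>\<^sub>M borel)" using nu(2) by (simp only: borel_prod)
  show "absolutely_continuous \<nu> (diag_lift lam0)"
    unfolding absolutely_continuous_def
  proof
    fix N assume N: "N \<in> null_sets \<nu>"
    then have Nb: "N \<in> sets borel" and N0: "emeasure \<nu> N = 0" using nu(2) by auto
    have m0: "measure \<nu> N = 0" using N0 by (simp add: measure_def)
    define p where "p t = joint_kernel M (dens (l - 1)) (dens l) (Q l) t N" for t
    have pm: "p \<in> borel_measurable \<nu>"
      unfolding measurable_cong_sets[OF nuS refl] p_def
      by (rule jk_meas[OF _ prior(2) dm dm qm Nb]) (rule Mp.sigma_finite_measure_axioms)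
    have props: "0 \<le> p t" "p t \<le> 5" "p t = 0 \<Longrightarrow> AE z in M. (z, z) \<notin> N" for t
      unfolding p_def
      using jk_props[OF prior(2) dm dm qm, of "l - 1" l, OF _ _ _ _ _ Nb] A12 A11[OF l] prop_dens[of l]
      by auto
    have pint: "integrable \<nu> p"
      by (rule nu.integrable_const_bound[where B=5]) (use props pm in auto)
    have "(\<integral>t. p t \<partial>\<nu>) = 0" using eq[OF Nb] m0 unfolding p_def by simp
    then have "AE t in \<nu>. p t = 0" using integral_nonneg_eq_0_iff_AE[OF pint] props by auto
    then obtain t where "p t = 0"
    proof -
      assume *: "\<And>t. p t = 0 \<Longrightarrow> thesis"
      show thesis
      proof (rule ccontr)
        assume "\<not> thesis"
        then have "\<forall>t. p t \<noteq> 0" using * by blast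
        with \<open>AE t in \<nu>. p t = 0\<close> have "AE t in \<nu>. False" by (auto elim: AE_mp)
        then show False using nu.AE_False by simp
      qed
    qed
    then have AEz: "AE z in M. (z, z) \<notin> N" using props(3) by blast
    have dg: "(\<lambda>z. (z, z)) \<in> borel_measurable borel"
      by (rule borel_measurable_continuous_onI) (intro continuous_intros)
    define D where "D = (\<lambda>z. (z, z)) -` N"
    have DM: "D \<in> sets M" unfolding D_def prior(2)
      using measurable_sets[OF dg Nb] by simp
    have "{x \<in> space M. \<not> (x, x) \<notin> N} \<in> null_sets M"
      using AEz AE_iff_null[of M "\<lambda>x. (x, x) \<notin> N"] DM unfolding D_def Mspace by (simp add: vimage_def)
    then have "D \<in> null_sets M" unfolding D_def Mspace by (simp add: vimage_def)
    then have DL: "D \<in> null_sets lam0" using lam(3) unfolding absolutely_continuous_def by auto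
    have dgL: "(\<lambda>z. (z, z)) \<in> measurable lam0 borel"
      using dg measurable_cong_sets[OF lam(2) refl] by blast
    have "emeasure (diag_lift lam0) N = emeasure lam0 ((\<lambda>z. (z, z)) -` N \<inter> space lam0)"
      unfolding diag_lift_def by (rule emeasure_distr[OF dgL Nb])
    also have "\<dots> = 0" using DL unfolding D_def Lspace by auto
    finally show "N \<in> null_sets (diag_lift lam0)" using Nb unfolding diag_lift_def by auto
  qed
qed

end
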